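(* Let $A=(A,\mu,\eta,\Delta,\varepsilon,S)$ be an involutory Hopf algebra in a symmetric monoidal category $\mathcal{C}$ satisfying (A1): there are an invertible object $I$, a universal left integral $\Lambda\colon I\to A$ and a universal right cointegral $\lambda\colon A\to I$ with $\lambda\Lambda=\mathrm{id}_I$. Then the map $$\Psi\colon \mathrm{Hom}_{\mathcal{C}}(A\otimes A,I)\to\mathrm{Hom}_{\mathcal{C}}(A\otimes I,I\otimes A),\qquad \Psi(e)=(e\otimes\mathrm{id}_A)(\mathrm{id}_A\otimes\Delta\Lambda),$$ is injective.
   Context: $\mathcal{C}$ symmetric monoidal with unit $\mathbb{1}$, symmetry $\tau$, constraints suppressed. An object $I$ is invertible if $I\otimes J\cong\mathbb{1}$ for some $J$. Involutory Hopf algebra: bialgebra with invertible antipode $S$, $S^2=\mathrm{id}_A$. A left integral is $\Lambda\colon I\to A$ with $\mu(\mathrm{id}_A\otimes\Lambda)=\varepsilon\otimes\Lambda$; a right cointegral is $\lambda\colon A\to I$ with $(\lambda\otimes\mathrm{id}_A)\Delta=\lambda\otimes\eta$. $\Lambda$ is universal if every left integral $X\to A$ factors uniquely through $\Lambda$ via a morphism $X\to I$; $\lambda$ is universal if every right cointegral $A\to X$ factors uniquely as $g'\lambda$ with $g'\colon I\to X$. *)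

theory Defs
  imports Main
begin

text \<open>A (strict) symmetric monoidal category, with associativity and unit
constraints suppressed (identities), as in the paper's convention.
Objects are all elements of type 'o; arrows are elements of type 'm satisfying arr.
cmp g f denotes the composite g after f.\<close>

record ('o, 'm) smc =
  arr :: "'m \<Rightarrow> bool"
  src :: "'m \<Rightarrow> 'o"
  tgt :: "'m \<Rightarrow> 'o"
  cmp :: "'m \<Rightarrow> 'm \<Rightarrow> 'm"
  ident :: "'o \<Rightarrow> 'm"
  otensor :: "'o \<Rightarrow> 'o \<Rightarrow> 'o"
  mtensor :: "'m \<Rightarrow> 'm \<Rightarrow> 'm"
  unit_ob :: "'o"
  symm :: "'o \<Rightarrow> 'o \<Rightarrow> 'm"

definition hom :: "('o, 'm) smc \<Rightarrow> 'o \<Rightarrow> 'o \<Rightarrow> 'm set" where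
  "hom C X Y = {f. arr C f \<and> src C f = X \<and> tgt C f = Y}"

locale ssmc =
  fixes C :: "('o, 'm) smc"
  assumes cmp_hom: "\<And>f g X Y Z. f \<in> hom C X Y \<Longrightarrow> g \<in> hom C Y Z \<Longrightarrow> cmp C g f \<in> hom C X Z"
    and cmp_assoc: "\<And>f g h X Y Z W. f \<in> hom C X Y \<Longrightarrow> g \<in> hom C Y Z \<Longrightarrow> h \<in> hom C Z W \<Longrightarrow>
                  cmp C h (cmp C g f) = cmp C (cmp C h g) f"
    and ident_hom: "\<And>X. ident C X \<in> hom C X X"
    and ident_left: "\<And>f. arr C f \<Longrightarrow> cmp C (ident C (tgt C f)) f = f"
    and ident_right: "\<And>f. arr C f \<Longrightarrow> cmp C f (ident C (src C f)) = f"
    and mtensor_hom: "\<And>f g X Y X' Y'. f \<in> hom C X Y \<Longrightarrow> g \<in> hom C X' Y' \<Longrightarrow>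
                  mtensor C f g \<in> hom C (otensor C X X') (otensor C Y Y')"
    and mtensor_cmp: "\<And>f g f' g' X Y Z X' Y' Z'. f \<in> hom C X Y \<Longrightarrow> g \<in> hom C Y Z \<Longrightarrow>
                  f' \<in> hom C X' Y' \<Longrightarrow> g' \<in> hom C Y' Z' \<Longrightarrow>
                  mtensor C (cmp C g f) (cmp C g' f') = cmp C (mtensor C g g') (mtensor C f f')"
    and mtensor_ident: "\<And>X Y. mtensor C (ident C X) (ident C Y) = ident C (otensor C X Y)"
    and otensor_assoc: "\<And>X Y Z. otensor C X (otensor C Y Z) = otensor C (otensor C X Y) Z"
    and otensor_unit_left: "\<And>X. otensor C (unit_ob C) X = X"
    and otensor_unit_right: "\<And>X. otensor C X (unit_ob C) = X"
    and mtensor_assoc: "\<And>f g h. arr C f \<Longrightarrow> arr C g \<Longrightarrow> arr C h \<Longrightarrow>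
                  mtensor C f (mtensor C g h) = mtensor C (mtensor C f g) h"
    and mtensor_unit_left: "\<And>f. arr C f \<Longrightarrow> mtensor C (ident C (unit_ob C)) f = f"
    and mtensor_unit_right: "\<And>f. arr C f \<Longrightarrow> mtensor C f (ident C (unit_ob C)) = f"
    and symm_hom: "\<And>X Y. symm C X Y \<in> hom C (otensor C X Y) (otensor C Y X)"
    and symm_natural: "\<And>f g X X' Y Y'. f \<in> hom C X X' \<Longrightarrow> g \<in> hom C Y Y' \<Longrightarrow>
                  cmp C (symm C X' Y') (mtensor C f g) = cmp C (mtensor C g f) (symm C X Y)"
    and symm_inv: "\<And>X Y. cmp C (symm C Y X) (symm C X Y) = ident C (otensor C X Y)"
    and symm_hexagon: "\<And>X Y Z. symm C X (otensor C Y Z) =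
                  cmp C (mtensor C (ident C Y) (symm C X Z)) (mtensor C (symm C X Y) (ident C Z))"

definition involutory_hopf ::
  "('o, 'm) smc \<Rightarrow> 'o \<Rightarrow> 'm \<Rightarrow> 'm \<Rightarrow> 'm \<Rightarrow> 'm \<Rightarrow> 'm \<Rightarrow> bool" where
  "involutory_hopf C A mu eta delta eps S \<longleftrightarrow>
     (let I = unit_ob C; T = otensor C; M = mtensor C; c = cmp C; i = ident C in
     mu \<in> hom C (T A A) A \<and> eta \<in> hom C I A \<and> delta \<in> hom C A (T A A) \<and>
     eps \<in> hom C A I \<and> S \<in> hom C A A \<and>
     \<comment> \<open>algebra\<close>
     c mu (M mu (i A)) = c mu (M (i A) mu) \<and>
     c mu (M eta (i A)) = i A \<and> c mu (M (i A) eta) = i A \<and>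
     \<comment> \<open>coalgebra\<close>
     c (M delta (i A)) delta = c (M (i A) delta) delta \<and>
     c (M eps (i A)) delta = i A \<and> c (M (i A) eps) delta = i A \<and>
     \<comment> \<open>bialgebra compatibility\<close>
     c delta mu = c (M mu mu) (c (M (M (i A) (symm C A A)) (i A)) (M delta delta)) \<and>
     c delta eta = M eta eta \<and>
     c eps mu = M eps eps \<and>
     c eps eta = i I \<and>
     \<comment> \<open>antipode\<close>
     c mu (c (M S (i A)) delta) = c eta eps \<and>
     c mu (c (M (i A) S) delta) = c eta eps \<and>
     \<comment> \<open>invertible, involutory antipode\<close>
     (\<exists>S'. S' \<in> hom C A A \<and> c S S' = i A \<and> c S' S = i A) \<and>
     c S S = i A)"

definition invertible_obj :: "('o, 'm) smc \<Rightarrow> 'o \<Rightarrow> bool" where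
  "invertible_obj C I \<longleftrightarrow>
     (\<exists>J f g. f \<in> hom C (otensor C I J) (unit_ob C) \<and> g \<in> hom C (unit_ob C) (otensor C I J) \<and>
        cmp C g f = ident C (otensor C I J) \<and> cmp C f g = ident C (unit_ob C))"

definition left_integral :: "('o, 'm) smc \<Rightarrow> 'o \<Rightarrow> 'm \<Rightarrow> 'm \<Rightarrow> 'o \<Rightarrow> 'm \<Rightarrow> bool" where
  "left_integral C A mu eps X L \<longleftrightarrow>
     L \<in> hom C X A \<and> cmp C mu (mtensor C (ident C A) L) = mtensor C eps L"

definition right_cointegral :: "('o, 'm) smc \<Rightarrow> 'o \<Rightarrow> 'm \<Rightarrow> 'm \<Rightarrow> 'o \<Rightarrow> 'm \<Rightarrow> bool" where
  "right_cointegral C A delta eta X l \<longleftrightarrow>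
     l \<in> hom C A X \<and> cmp C (mtensor C l (ident C A)) delta = mtensor C l eta"

definition universal_left_integral ::
  "('o, 'm) smc \<Rightarrow> 'o \<Rightarrow> 'm \<Rightarrow> 'm \<Rightarrow> 'o \<Rightarrow> 'm \<Rightarrow> bool" where
  "universal_left_integral C A mu eps I L \<longleftrightarrow>
     left_integral C A mu eps I L \<and>
     (\<forall>X L'. left_integral C A mu eps X L' \<longrightarrow> (\<exists>!g. g \<in> hom C X I \<and> cmp C L g = L'))"

definition universal_right_cointegral ::
  "('o, 'm) smc \<Rightarrow> 'o \<Rightarrow> 'm \<Rightarrow> 'm \<Rightarrow> 'o \<Rightarrow> 'm \<Rightarrow> bool" where
  "universal_right_cointegral C A delta eta I l \<longleftrightarrow>
     right_cointegral C A delta eta I l \<and>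
     (\<forall>X l'. right_cointegral C A delta eta X l' \<longrightarrow> (\<exists>!g. g \<in> hom C I X \<and> cmp C g l = l'))"

definition Psi :: "('o, 'm) smc \<Rightarrow> 'o \<Rightarrow> 'm \<Rightarrow> 'm \<Rightarrow> 'm \<Rightarrow> 'm" where
  "Psi C A delta L e =
     cmp C (mtensor C e (ident C A)) (mtensor C (ident C A) (cmp C delta L))"

end

theory Submission
  imports Defs
begin

context ssmc begin

abbreviation Cmp (infixr "\<cdot>" 55) where "g \<cdot> f \<equiv> cmp C g f"
abbreviation Ten (infixr "\<otimes>" 60) where "f \<otimes> g \<equiv> mtensor C f g"
abbreviation OTen (infixr "\<odot>" 60) where "X \<odot> Y \<equiv> otensor C X Y"
abbreviation Idn ("\<one>") where "\<one> X \<equiv> ident C X"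
abbreviation U where "U \<equiv> unit_ob C"
abbreviation Ar where "Ar f \<equiv> arr C f"
abbreviation Sr where "Sr f \<equiv> src C f"
abbreviation Tg where "Tg f \<equiv> tgt C f"

lemma hom_iff: "f \<in> hom C X Y \<longleftrightarrow> Ar f \<and> Sr f = X \<and> Tg f = Y"
  by (simp add: hom_def)

lemma cmp_ok: assumes "Ar f" "Ar g" "Sr g = Tg f"
  shows "Ar (g \<cdot> f) \<and> Sr (g \<cdot> f) = Sr f \<and> Tg (g \<cdot> f) = Tg g"
  using cmp_hom[of f "Sr f" "Tg f" g "Tg g"] assms by (simp add: hom_iff)

lemma arr_cmp[simp]: "Ar f \<Longrightarrow> Ar g \<Longrightarrow> Sr g = Tg f \<Longrightarrow> Ar (g \<cdot> f)" using cmp_ok by blast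
lemma src_cmp[simp]: "Ar f \<Longrightarrow> Ar g \<Longrightarrow> Sr g = Tg f \<Longrightarrow> Sr (g \<cdot> f) = Sr f" using cmp_ok by blast
lemma tgt_cmp[simp]: "Ar f \<Longrightarrow> Ar g \<Longrightarrow> Sr g = Tg f \<Longrightarrow> Tg (g \<cdot> f) = Tg g" using cmp_ok by blast

lemma ten_ok: assumes "Ar f" "Ar g"
  shows "Ar (f \<otimes> g) \<and> Sr (f \<otimes> g) = Sr f \<odot> Sr g \<and> Tg (f \<otimes> g) = Tg f \<odot> Tg g"
  using mtensor_hom[of f "Sr f" "Tg f" g "Sr g" "Tg g"] assms by (simp add: hom_iff)
lemma arr_ten[simp]: "Ar f \<Longrightarrow> Ar g \<Longrightarrow> Ar (f \<otimes> g)" using ten_ok by blast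
lemma src_ten[simp]: "Ar f \<Longrightarrow> Ar g \<Longrightarrow> Sr (f \<otimes> g) = Sr f \<odot> Sr g" using ten_ok by blast
lemma tgt_ten[simp]: "Ar f \<Longrightarrow> Ar g \<Longrightarrow> Tg (f \<otimes> g) = Tg f \<odot> Tg g" using ten_ok by blast

lemma arr_id[simp]: "Ar (\<one> X)" and src_id[simp]: "Sr (\<one> X) = X" and tgt_id[simp]: "Tg (\<one> X) = X"
  using ident_hom[of X] by (auto simp: hom_iff)
lemma arr_sy[simp]: "Ar (symm C X Y)" and src_sy[simp]: "Sr (symm C X Y) = X \<odot> Y" and tgt_sy[simp]: "Tg (symm C X Y) = Y \<odot> X"
  using symm_hom[of X Y] by (auto simp: hom_iff)

declare otensor_assoc[simp] otensor_unit_left[simp] otensor_unit_right[simp]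

lemma assoc: "Ar f \<Longrightarrow> Ar g \<Longrightarrow> Ar h \<Longrightarrow> Sr g = Tg f \<Longrightarrow> Sr h = Tg g \<Longrightarrow> (h \<cdot> g) \<cdot> f = h \<cdot> g \<cdot> f"
  using cmp_assoc[of f "Sr f" "Tg f" g "Tg g" h "Tg h"] by (simp add: hom_iff)

lemma xch: "Ar f \<Longrightarrow> Ar g \<Longrightarrow> Sr g = Tg f \<Longrightarrow> Ar f' \<Longrightarrow> Ar g' \<Longrightarrow> Sr g' = Tg f' \<Longrightarrow>
   (g \<cdot> f) \<otimes> (g' \<cdot> f') = (g \<otimes> g') \<cdot> (f \<otimes> f')"
  using mtensor_cmp[of f "Sr f" "Tg f" g "Tg g" f' "Sr f'" "Tg f'" g' "Tg g'"] by (simp add: hom_iff)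

lemma idl[simp]: "Ar f \<Longrightarrow> Tg f = Y \<Longrightarrow> \<one> Y \<cdot> f = f" using ident_left by blast
lemma idr[simp]: "Ar f \<Longrightarrow> Sr f = X \<Longrightarrow> f \<cdot> \<one> X = f" using ident_right by blast

lemma tassoc[simp]: "Ar f \<Longrightarrow> Ar g \<Longrightarrow> Ar h \<Longrightarrow> (f \<otimes> g) \<otimes> h = f \<otimes> g \<otimes> h"
  using mtensor_assoc by simp
lemma tid[simp]: "\<one> X \<otimes> \<one> Y = \<one> (X \<odot> Y)" by (rule mtensor_ident)
lemma tid2[simp]: "Ar f \<Longrightarrow> \<one> X \<otimes> \<one> Y \<otimes> f = \<one> (X \<odot> Y) \<otimes> f"
  by (metis arr_id tassoc tid)
lemma tunl[simp]: "Ar f \<Longrightarrow> \<one> U \<otimes> f = f" by (rule mtensor_unit_left)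
lemma tunr[simp]: "Ar f \<Longrightarrow> f \<otimes> \<one> U = f" by (rule mtensor_unit_right)


lemma W1: "Ar f \<Longrightarrow> Ar g \<Longrightarrow> Sr g = Tg f \<Longrightarrow> Ar h \<Longrightarrow> (g \<cdot> f) \<otimes> h = (g \<otimes> h) \<cdot> (f \<otimes> \<one> (Sr h))"
  using xch[of f g "\<one> (Sr h)" h] by simp
lemma W2: "Ar f \<Longrightarrow> Ar g \<Longrightarrow> Sr g = Tg f \<Longrightarrow> Ar h \<Longrightarrow> (g \<cdot> f) \<otimes> h = (g \<otimes> \<one> (Tg h)) \<cdot> (f \<otimes> h)"
  using xch[of f g h "\<one> (Tg h)"] by simp
lemma W3: "Ar f \<Longrightarrow> Ar g \<Longrightarrow> Sr g = Tg f \<Longrightarrow> Ar h \<Longrightarrow> h \<otimes> (g \<cdot> f) = (h \<otimes> g) \<cdot> (\<one> (Sr h) \<otimes> f)"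
  using xch[of "\<one> (Sr h)" h f g] by simp
lemma W4: "Ar f \<Longrightarrow> Ar g \<Longrightarrow> Sr g = Tg f \<Longrightarrow> Ar h \<Longrightarrow> h \<otimes> (g \<cdot> f) = (\<one> (Tg h) \<otimes> g) \<cdot> (h \<otimes> f)"
  using xch[of h "\<one> (Tg h)" f g] by simp
lemma X1: "Ar f \<Longrightarrow> Ar g \<Longrightarrow> f \<otimes> g = (f \<otimes> \<one> (Tg g)) \<cdot> (\<one> (Sr f) \<otimes> g)"
  using xch[of "\<one> (Sr f)" f g "\<one> (Tg g)"] by simp
lemma X2: "Ar f \<Longrightarrow> Ar g \<Longrightarrow> f \<otimes> g = (\<one> (Tg f) \<otimes> g) \<cdot> (f \<otimes> \<one> (Sr g))"
  using xch[of f "\<one> (Tg f)" "\<one> (Sr g)" g] by simp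

end

locale hopf = ssmc C for C :: "('o, 'm) smc" +
  fixes A I :: 'o and mu eta delta eps S L l :: 'm
  assumes H: "involutory_hopf C A mu eta delta eps S"
    and Inv: "invertible_obj C I"
    and UL: "universal_left_integral C A mu eps I L"
    and UR: "universal_right_cointegral C A delta eta I l"
    and lL: "cmp C l L = ident C I"
begin

lemma basic:
  "mu \<in> hom C (A \<odot> A) A" "eta \<in> hom C U A" "delta \<in> hom C A (A \<odot> A)" "eps \<in> hom C A U" "S \<in> hom C A A"
  "L \<in> hom C I A" "l \<in> hom C A I"
  using H UL UR unfolding involutory_hopf_def universal_left_integral_def left_integral_def
     universal_right_cointegral_def right_cointegral_def Let_def by auto

lemma ty[simp]: "Ar mu" "Sr mu = A \<odot> A" "Tg mu = A" "Ar eta" "Sr eta = U" "Tg eta = A"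
  "Ar delta" "Sr delta = A" "Tg delta = A \<odot> A" "Ar eps" "Sr eps = A" "Tg eps = U"
  "Ar S" "Sr S = A" "Tg S = A" "Ar L" "Sr L = I" "Tg L = A" "Ar l" "Sr l = A" "Tg l = I"
  using basic by (auto simp: hom_iff)

lemma eqs:
  "mu \<cdot> (mu \<otimes> \<one> A) = mu \<cdot> (\<one> A \<otimes> mu)"
  "mu \<cdot> (eta \<otimes> \<one> A) = \<one> A" "mu \<cdot> (\<one> A \<otimes> eta) = \<one> A"
  "(delta \<otimes> \<one> A) \<cdot> delta = (\<one> A \<otimes> delta) \<cdot> delta"
  "(eps \<otimes> \<one> A) \<cdot> delta = \<one> A" "(\<one> A \<otimes> eps) \<cdot> delta = \<one> A"
  "delta \<cdot> mu = (mu \<otimes> mu) \<cdot> (\<one> A \<otimes> symm C A A \<otimes> \<one> A) \<cdot> (delta \<otimes> delta)"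
  "delta \<cdot> eta = eta \<otimes> eta" "eps \<cdot> mu = eps \<otimes> eps" "eps \<cdot> eta = \<one> U"
  "mu \<cdot> (S \<otimes> \<one> A) \<cdot> delta = eta \<cdot> eps" "mu \<cdot> (\<one> A \<otimes> S) \<cdot> delta = eta \<cdot> eps"
  "S \<cdot> S = \<one> A"
  "mu \<cdot> (\<one> A \<otimes> L) = eps \<otimes> L" "(l \<otimes> \<one> A) \<cdot> delta = l \<otimes> eta"
  "l \<cdot> L = \<one> I"
  using H UL UR lL unfolding involutory_hopf_def universal_left_integral_def left_integral_def
     universal_right_cointegral_def right_cointegral_def Let_def by auto

declare assoc[simp]

lemma chain: "a \<cdot> b = c \<Longrightarrow> Ar r \<Longrightarrow> Ar a \<Longrightarrow> Ar b \<Longrightarrow> Sr a = Tg b \<Longrightarrow> Sr b = Tg r \<Longrightarrow> a \<cdot> b \<cdot> r = c \<cdot> r"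
  by (metis assoc)

definition "lp = (\<one> A \<otimes> l) \<cdot> delta"

lemma lp_ty[simp]: "Ar lp" "Sr lp = A" "Tg lp = A \<odot> I" by (auto simp: lp_def)

lemma lp_coint: "(lp \<otimes> \<one> A) \<cdot> delta = lp \<otimes> eta"
proof -
  have "(lp \<otimes> \<one> A) \<cdot> delta = (\<one> A \<otimes> l \<otimes> \<one> A) \<cdot> (delta \<otimes> \<one> A) \<cdot> delta"
    unfolding lp_def by (subst W1, auto)
  also have "\<dots> = (\<one> A \<otimes> l \<otimes> \<one> A) \<cdot> (\<one> A \<otimes> delta) \<cdot> delta"
    by (simp add: eqs)
  also have "\<dots> = (\<one> A \<otimes> ((l \<otimes> \<one> A) \<cdot> delta)) \<cdot> delta"
    by (subst W3, auto)
  also have "\<dots> = (\<one> A \<otimes> l \<otimes> eta) \<cdot> delta"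
    by (simp add: eqs)
  also have "\<dots> = lp \<otimes> eta"
    unfolding lp_def by (subst W1, auto)
  finally show ?thesis .
qed

definition "gam = (\<one> A \<otimes> l) \<cdot> delta \<cdot> L"
lemma gam_ty[simp]: "Ar gam" "Sr gam = I" "Tg gam = A \<odot> I" by (auto simp: gam_def)

lemma gam_l: "gam \<cdot> l = (\<one> A \<otimes> l) \<cdot> delta"
proof -
  have rc: "right_cointegral C A delta eta (A \<odot> I) lp"
    unfolding right_cointegral_def using lp_coint by (simp add: hom_iff)
  then obtain g where g: "g \<in> hom C I (A \<odot> I)" "g \<cdot> l = lp"
    using UR unfolding universal_right_cointegral_def by blast
  have "gam = lp \<cdot> L" by (simp add: gam_def lp_def)
  also have "\<dots> = (g \<cdot> l) \<cdot> L" using g by simp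
  also have "\<dots> = g" using g(1) by (simp add: hom_iff eqs)
  finally show ?thesis using g by (simp add: lp_def)
qed

lemma sq1: "(\<one> (A \<odot> A) \<otimes> l) \<cdot> (delta \<otimes> \<one> A) = (delta \<otimes> \<one> I) \<cdot> (\<one> A \<otimes> l)"
  using X1[of delta l] X2[of delta l] by simp

lemma G1: "(\<one> A \<otimes> gam) \<cdot> gam = (delta \<otimes> \<one> I) \<cdot> gam"
proof -
  have "(\<one> A \<otimes> gam) \<cdot> gam = (\<one> A \<otimes> gam) \<cdot> (\<one> A \<otimes> l) \<cdot> delta \<cdot> L"
    by (simp add: gam_def)
  also have "\<dots> = (\<one> A \<otimes> (gam \<cdot> l)) \<cdot> delta \<cdot> L"
    by (subst W3, auto)
  also have "\<dots> = (\<one> A \<otimes> ((\<one> A \<otimes> l) \<cdot> delta)) \<cdot> delta \<cdot> L"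
    by (simp add: gam_l)
  also have "\<dots> = (\<one> (A \<odot> A) \<otimes> l) \<cdot> (\<one> A \<otimes> delta) \<cdot> delta \<cdot> L"
    by (subst W3, auto)
  also have "\<dots> = (\<one> (A \<odot> A) \<otimes> l) \<cdot> (delta \<otimes> \<one> A) \<cdot> delta \<cdot> L"
    by (simp add: chain[OF eqs(4)[symmetric]])
  also have "\<dots> = (delta \<otimes> \<one> I) \<cdot> gam"
    by (simp add: chain[OF sq1] gam_def)
  finally show ?thesis .
qed

lemma sq2: "(eps \<otimes> \<one> I) \<cdot> (\<one> A \<otimes> l) = l \<cdot> (eps \<otimes> \<one> A)"
  using X1[of eps l] X2[of eps l] by simp

lemma G2: "(eps \<otimes> \<one> I) \<cdot> gam = \<one> I"
  by (simp add: gam_def chain[OF sq2] chain[OF eqs(5)] eqs)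

lemma G3: "(mu \<otimes> \<one> I) \<cdot> (S \<otimes> gam) \<cdot> gam = eta \<otimes> \<one> I"
proof -
  have "(mu \<otimes> \<one> I) \<cdot> (S \<otimes> gam) \<cdot> gam = (mu \<otimes> \<one> I) \<cdot> (S \<otimes> \<one> (A \<odot> I)) \<cdot> (\<one> A \<otimes> gam) \<cdot> gam"
    using X1[of S gam] by simp
  also have "\<dots> = (mu \<otimes> \<one> I) \<cdot> (S \<otimes> \<one> (A \<odot> I)) \<cdot> (delta \<otimes> \<one> I) \<cdot> gam"
    by (simp add: G1)
  also have "\<dots> = ((mu \<cdot> (S \<otimes> \<one> A) \<cdot> delta) \<otimes> \<one> I) \<cdot> gam"
    by (simp add: W1)
  also have "\<dots> = ((eta \<cdot> eps) \<otimes> \<one> I) \<cdot> gam"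
    by (simp add: eqs)
  also have "\<dots> = eta \<otimes> \<one> I"
    by (simp add: W1 G2)
  finally show ?thesis .
qed

definition "Rg = (mu \<otimes> \<one> I) \<cdot> (\<one> A \<otimes> gam)"
definition "Rh = (mu \<otimes> \<one> I) \<cdot> (\<one> A \<otimes> ((S \<otimes> \<one> I) \<cdot> gam))"
lemma R_ty[simp]: "Ar Rg" "Sr Rg = A \<odot> I" "Tg Rg = A \<odot> I" "Ar Rh" "Sr Rh = A \<odot> I" "Tg Rh = A \<odot> I"
  by (auto simp: Rg_def Rh_def)

lemma sq3: "(\<one> A \<otimes> gam) \<cdot> (mu \<otimes> \<one> I) = (mu \<otimes> \<one> (A \<odot> I)) \<cdot> (\<one> (A \<odot> A) \<otimes> gam)"
  using X1[of mu gam] X2[of mu gam] by simp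

lemma sq4: "(mu \<otimes> \<one> I) \<cdot> (mu \<otimes> \<one> (A \<odot> I)) = (mu \<otimes> \<one> I) \<cdot> (\<one> A \<otimes> mu \<otimes> \<one> I)"
proof -
  have "(mu \<otimes> \<one> I) \<cdot> (mu \<otimes> \<one> (A \<odot> I)) = (mu \<cdot> (mu \<otimes> \<one> A)) \<otimes> \<one> I" by (simp add: W1)
  also have "\<dots> = (mu \<cdot> (\<one> A \<otimes> mu)) \<otimes> \<one> I" by (simp add: eqs)
  also have "\<dots> = (mu \<otimes> \<one> I) \<cdot> (\<one> A \<otimes> mu \<otimes> \<one> I)" by (simp add: W1)
  finally show ?thesis .
qed

lemma RgRh: "Rg \<cdot> Rh = \<one> (A \<odot> I)"
proof -
  have "Rg \<cdot> Rh = (mu \<otimes> \<one> I) \<cdot> (\<one> A \<otimes> gam) \<cdot> (mu \<otimes> \<one> I) \<cdot> (\<one> A \<otimes> ((S \<otimes> \<one> I) \<cdot> gam))"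
    by (simp add: Rg_def Rh_def)
  also have "\<dots> = (mu \<otimes> \<one> I) \<cdot> (mu \<otimes> \<one> (A \<odot> I)) \<cdot> (\<one> (A \<odot> A) \<otimes> gam) \<cdot> (\<one> A \<otimes> ((S \<otimes> \<one> I) \<cdot> gam))"
    by (simp add: chain[OF sq3])
  also have "\<dots> = (mu \<otimes> \<one> I) \<cdot> (\<one> A \<otimes> mu \<otimes> \<one> I) \<cdot> (\<one> (A \<odot> A) \<otimes> gam) \<cdot> (\<one> A \<otimes> ((S \<otimes> \<one> I) \<cdot> gam))"
    by (simp add: chain[OF sq4])
  also have "\<dots> = (mu \<otimes> \<one> I) \<cdot> (\<one> A \<otimes> ((mu \<otimes> \<one> I) \<cdot> (\<one> A \<otimes> gam) \<cdot> (S \<otimes> \<one> I) \<cdot> gam))"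
    by (simp add: W3)
  also have "\<dots> = (mu \<otimes> \<one> I) \<cdot> (\<one> A \<otimes> ((mu \<otimes> \<one> I) \<cdot> (S \<otimes> gam) \<cdot> gam))"
    using chain[OF X2[of S gam, symmetric]] by simp
  also have "\<dots> = (mu \<otimes> \<one> I) \<cdot> (\<one> A \<otimes> eta \<otimes> \<one> I)"
    by (simp add: G3)
  also have "\<dots> = (mu \<cdot> (\<one> A \<otimes> eta)) \<otimes> \<one> I"
    by (simp add: W1)
  also have "\<dots> = \<one> (A \<odot> I)" by (simp add: eqs)
  finally show ?thesis .
qed

definition "Dl = delta \<cdot> L"
abbreviation "tau \<equiv> symm C A A"
lemma Dl_ty[simp]: "Ar Dl" "Sr Dl = I" "Tg Dl = A \<odot> A" by (auto simp: Dl_def)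
lemma gam_Dl: "gam = (\<one> A \<otimes> l) \<cdot> Dl" by (simp add: gam_def Dl_def)

lemma E1: "(mu \<otimes> mu) \<cdot> (\<one> A \<otimes> tau \<otimes> \<one> A) \<cdot> (delta \<otimes> Dl) = eps \<otimes> Dl"
proof -
  have "eps \<otimes> Dl = delta \<cdot> (eps \<otimes> L)" unfolding Dl_def by (simp add: W4)
  also have "\<dots> = delta \<cdot> mu \<cdot> (\<one> A \<otimes> L)" by (simp add: eqs)
  also have "\<dots> = (mu \<otimes> mu) \<cdot> (\<one> A \<otimes> tau \<otimes> \<one> A) \<cdot> (delta \<otimes> delta) \<cdot> (\<one> A \<otimes> L)"
    by (simp add: chain[OF eqs(7)])
  also have "\<dots> = (mu \<otimes> mu) \<cdot> (\<one> A \<otimes> tau \<otimes> \<one> A) \<cdot> (delta \<otimes> Dl)"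
    unfolding Dl_def by (simp add: W3)
  finally show ?thesis by simp
qed

lemma Sep: "(S \<otimes> eps \<otimes> Dl) \<cdot> (delta \<otimes> \<one> I) = S \<otimes> Dl"
proof -
  have "S \<otimes> eps = S \<cdot> (\<one> A \<otimes> eps)" using X1[of S eps] by simp
  hence "(S \<otimes> eps) \<cdot> delta = S" by (simp add: chain eqs)
  hence "S \<otimes> Dl = ((S \<otimes> eps) \<cdot> delta) \<otimes> Dl" by simp
  also have "\<dots> = (S \<otimes> eps \<otimes> Dl) \<cdot> (delta \<otimes> \<one> I)" by (simp add: W1)
  finally show ?thesis by simp
qed

lemma m3: "mu \<cdot> (S \<otimes> mu) = mu \<cdot> ((mu \<cdot> (S \<otimes> \<one> A)) \<otimes> \<one> A)"
proof -
  have "mu \<cdot> (S \<otimes> mu) = mu \<cdot> (\<one> A \<otimes> mu) \<cdot> (S \<otimes> \<one> (A \<odot> A))" using X2[of S mu] by simp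
  also have "\<dots> = mu \<cdot> (mu \<otimes> \<one> A) \<cdot> (S \<otimes> \<one> (A \<odot> A))" by (simp add: chain[OF eqs(1)[symmetric]])
  also have "\<dots> = mu \<cdot> ((mu \<cdot> (S \<otimes> \<one> A)) \<otimes> \<one> A)" by (simp add: W1)
  finally show ?thesis .
qed

definition "Xm = (tau \<otimes> \<one> A) \<cdot> (\<one> A \<otimes> Dl)"
lemma Xm_ty[simp]: "Ar Xm" "Sr Xm = A \<odot> I" "Tg Xm = (A \<odot> A) \<odot> A" by (auto simp: Xm_def)

lemma Lm: "(\<one> A \<otimes> mu) \<cdot> (tau \<otimes> \<one> A) \<cdot> (\<one> A \<otimes> Dl) = (mu \<otimes> \<one> A) \<cdot> (S \<otimes> Dl)"
proof -
  have "(mu \<otimes> \<one> A) \<cdot> (S \<otimes> Dl) = (mu \<otimes> \<one> A) \<cdot> (S \<otimes> eps \<otimes> Dl) \<cdot> (delta \<otimes> \<one> I)"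
    by (simp add: Sep)
  also have "\<dots> = (mu \<otimes> \<one> A) \<cdot> (S \<otimes> ((mu \<otimes> mu) \<cdot> (\<one> A \<otimes> tau \<otimes> \<one> A) \<cdot> (delta \<otimes> Dl))) \<cdot> (delta \<otimes> \<one> I)"
    by (simp add: E1)
  also have "\<dots> = (mu \<otimes> \<one> A) \<cdot> (S \<otimes> mu \<otimes> mu) \<cdot> (\<one> (A \<odot> A) \<otimes> tau \<otimes> \<one> A) \<cdot> (\<one> A \<otimes> delta \<otimes> Dl) \<cdot> (delta \<otimes> \<one> I)"
    by (simp add: W3)
  also have "\<dots> = ((mu \<cdot> (S \<otimes> mu)) \<otimes> mu) \<cdot> (\<one> (A \<odot> A) \<otimes> tau \<otimes> \<one> A) \<cdot> (\<one> A \<otimes> delta \<otimes> Dl) \<cdot> (delta \<otimes> \<one> I)"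
    by (subst W2, auto)
  also have "\<dots> = ((mu \<cdot> ((mu \<cdot> (S \<otimes> \<one> A)) \<otimes> \<one> A)) \<otimes> mu) \<cdot> (\<one> (A \<odot> A) \<otimes> tau \<otimes> \<one> A) \<cdot> (\<one> A \<otimes> delta \<otimes> Dl) \<cdot> (delta \<otimes> \<one> I)"
    by (simp only: m3)
  also have "\<dots> = (mu \<otimes> mu) \<cdot> ((mu \<cdot> (S \<otimes> \<one> A)) \<otimes> \<one> ((A \<odot> A) \<odot> A)) \<cdot> (\<one> (A \<odot> A) \<otimes> tau \<otimes> \<one> A) \<cdot> (\<one> A \<otimes> delta \<otimes> Dl) \<cdot> (delta \<otimes> \<one> I)"
    by (subst W1, auto)
  also have "(\<one> A \<otimes> delta \<otimes> Dl) \<cdot> (delta \<otimes> \<one> I) = (delta \<otimes> \<one> A \<otimes> Dl) \<cdot> (delta \<otimes> \<one> I)"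
  proof -
    have "(\<one> A \<otimes> delta \<otimes> Dl) \<cdot> (delta \<otimes> \<one> I) = ((\<one> A \<otimes> delta) \<cdot> delta) \<otimes> Dl" by (simp add: W1)
    also have "\<dots> = ((delta \<otimes> \<one> A) \<cdot> delta) \<otimes> Dl" by (simp add: eqs)
    also have "\<dots> = (delta \<otimes> \<one> A \<otimes> Dl) \<cdot> (delta \<otimes> \<one> I)" by (simp add: W1)
    finally show ?thesis .
  qed
  also have "(\<one> (A \<odot> A) \<otimes> tau \<otimes> \<one> A) \<cdot> (delta \<otimes> \<one> A \<otimes> Dl) \<cdot> (delta \<otimes> \<one> I) = (delta \<otimes> Xm) \<cdot> (delta \<otimes> \<one> I)"
  proof -
    have "delta \<otimes> Xm = (\<one> (A \<odot> A) \<otimes> tau \<otimes> \<one> A) \<cdot> (delta \<otimes> \<one> A \<otimes> Dl)"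
      unfolding Xm_def by (subst W4, auto)
    thus ?thesis by simp
  qed
  also have "((mu \<cdot> (S \<otimes> \<one> A)) \<otimes> \<one> ((A \<odot> A) \<odot> A)) \<cdot> (delta \<otimes> Xm) \<cdot> (delta \<otimes> \<one> I) = ((mu \<cdot> (S \<otimes> \<one> A) \<cdot> delta) \<otimes> Xm) \<cdot> (delta \<otimes> \<one> I)"
  proof -
    have "((mu \<cdot> (S \<otimes> \<one> A)) \<cdot> delta) \<otimes> (\<one> ((A \<odot> A) \<odot> A) \<cdot> Xm) = ((mu \<cdot> (S \<otimes> \<one> A)) \<otimes> \<one> ((A \<odot> A) \<odot> A)) \<cdot> (delta \<otimes> Xm)"
      by (rule xch) auto
    thus ?thesis by simp
  qed
  also have "\<dots> = ((eta \<cdot> eps) \<otimes> Xm) \<cdot> (delta \<otimes> \<one> I)" by (simp add: eqs)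
  also have "(mu \<otimes> mu) \<cdot> ((eta \<cdot> eps) \<otimes> Xm) \<cdot> (delta \<otimes> \<one> I) = (\<one> A \<otimes> mu) \<cdot> (eps \<otimes> Xm) \<cdot> (delta \<otimes> \<one> I)"
  proof -
    have a: "(eta \<cdot> eps) \<otimes> Xm = (eta \<otimes> \<one> ((A \<odot> A) \<odot> A)) \<cdot> (eps \<otimes> Xm)" by (subst W2, auto)
    have b: "(mu \<otimes> mu) \<cdot> (eta \<otimes> \<one> ((A \<odot> A) \<odot> A)) = (mu \<cdot> (eta \<otimes> \<one> A)) \<otimes> mu"
      by (simp add: W1)
    show ?thesis unfolding a by (simp add: chain[OF b] eqs)
  qed
  also have "\<dots> = (\<one> A \<otimes> mu) \<cdot> Xm"
  proof -
    have a: "eps \<otimes> Xm = Xm \<cdot> (eps \<otimes> \<one> (A \<odot> I))" using X2[of eps Xm] by simp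
    have b: "(eps \<otimes> \<one> (A \<odot> I)) \<cdot> (delta \<otimes> \<one> I) = ((eps \<otimes> \<one> A) \<cdot> delta) \<otimes> \<one> I" by (simp add: W1)
    show ?thesis unfolding a using b by (simp add: eqs)
  qed
  finally show ?thesis unfolding Xm_def by simp
qed

lemma Zlem: "(\<one> A \<otimes> l) \<cdot> (\<one> A \<otimes> mu) \<cdot> (tau \<otimes> \<one> A) \<cdot> (S \<otimes> Dl) = Rg"
proof -
  have a: "S \<otimes> Dl = (\<one> A \<otimes> Dl) \<cdot> (S \<otimes> \<one> I)" using X2[of S Dl] by simp
  have b: "(S \<otimes> Dl) \<cdot> (S \<otimes> \<one> I) = \<one> A \<otimes> Dl"
    using xch[of S S "\<one> I" Dl] by (simp add: eqs)
  have c: "(\<one> A \<otimes> l) \<cdot> (mu \<otimes> \<one> A) = (mu \<otimes> \<one> I) \<cdot> (\<one> (A \<odot> A) \<otimes> l)"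
    using X1[of mu l] X2[of mu l] by simp
  have d: "(\<one> (A \<odot> A) \<otimes> l) \<cdot> (\<one> A \<otimes> Dl) = \<one> A \<otimes> gam"
    unfolding gam_Dl by (simp add: W3)
  have "(\<one> A \<otimes> l) \<cdot> (\<one> A \<otimes> mu) \<cdot> (tau \<otimes> \<one> A) \<cdot> (S \<otimes> Dl)
      = (\<one> A \<otimes> l) \<cdot> ((\<one> A \<otimes> mu) \<cdot> (tau \<otimes> \<one> A) \<cdot> (\<one> A \<otimes> Dl)) \<cdot> (S \<otimes> \<one> I)"
    unfolding a by simp
  also have "\<dots> = (\<one> A \<otimes> l) \<cdot> (mu \<otimes> \<one> A) \<cdot> (S \<otimes> Dl) \<cdot> (S \<otimes> \<one> I)"
    unfolding Lm by simp
  also have "\<dots> = (\<one> A \<otimes> l) \<cdot> (mu \<otimes> \<one> A) \<cdot> (\<one> A \<otimes> Dl)"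
    by (simp add: b)
  also have "\<dots> = (mu \<otimes> \<one> I) \<cdot> (\<one> (A \<odot> A) \<otimes> l) \<cdot> (\<one> A \<otimes> Dl)"
    by (simp add: chain[OF c])
  also have "\<dots> = Rg" by (simp add: d Rg_def)
  finally show ?thesis .
qed

definition "Fm P = (\<one> I \<otimes> (l \<cdot> mu \<cdot> tau)) \<cdot> (P \<otimes> S) \<cdot> (\<one> A \<otimes> symm C A I)"

lemma Zp: "(\<one> A \<otimes> (l \<cdot> mu \<cdot> tau)) \<cdot> (Dl \<otimes> S) \<cdot> symm C A I = Rg"
proof -
  have n: "symm C A (A \<odot> A) \<cdot> (S \<otimes> Dl) = (Dl \<otimes> S) \<cdot> symm C A I"
    using symm_natural[of S A A Dl I "A \<odot> A"] by (simp add: hom_iff)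
  have h: "symm C A (A \<odot> A) = (\<one> A \<otimes> tau) \<cdot> (tau \<otimes> \<one> A)"
    using symm_hexagon[of A A A] by simp
  have ii: "tau \<cdot> tau = \<one> (A \<odot> A)" using symm_inv[of A A] by simp
  have "(\<one> A \<otimes> (l \<cdot> mu \<cdot> tau)) \<cdot> (Dl \<otimes> S) \<cdot> symm C A I
      = (\<one> A \<otimes> (l \<cdot> mu \<cdot> tau)) \<cdot> (\<one> A \<otimes> tau) \<cdot> (tau \<otimes> \<one> A) \<cdot> (S \<otimes> Dl)"
    unfolding n[symmetric] h by simp
  also have "\<dots> = (\<one> A \<otimes> (l \<cdot> mu \<cdot> tau \<cdot> tau)) \<cdot> (tau \<otimes> \<one> A) \<cdot> (S \<otimes> Dl)"
    by (simp add: W3)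
  also have "\<dots> = (\<one> A \<otimes> (l \<cdot> mu)) \<cdot> (tau \<otimes> \<one> A) \<cdot> (S \<otimes> Dl)"
    by (simp add: ii)
  also have "\<dots> = Rg" unfolding Zlem[symmetric] by (simp add: W3)
  finally show ?thesis .
qed

lemma FPsi: assumes e: "e \<in> hom C (A \<odot> A) I"
  shows "Fm (Psi C A delta L e) = (e \<otimes> \<one> I) \<cdot> (\<one> A \<otimes> Rg)"
proof -
  have te: "Ar e" "Sr e = A \<odot> A" "Tg e = I" using e by (auto simp: hom_iff)
  have p: "Psi C A delta L e = (e \<otimes> \<one> A) \<cdot> (\<one> A \<otimes> Dl)" by (simp add: Psi_def Dl_def)
  have a: "(Psi C A delta L e) \<otimes> S = (e \<otimes> \<one> (A \<odot> A)) \<cdot> (\<one> A \<otimes> Dl \<otimes> S)"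
    unfolding p using te by (subst W2, auto)
  have b: "(\<one> I \<otimes> (l \<cdot> mu \<cdot> tau)) \<cdot> (e \<otimes> \<one> (A \<odot> A)) = (e \<otimes> \<one> I) \<cdot> (\<one> (A \<odot> A) \<otimes> (l \<cdot> mu \<cdot> tau))"
    using X1[of e "l \<cdot> mu \<cdot> tau"] X2[of e "l \<cdot> mu \<cdot> tau"] te by simp
  have "Fm (Psi C A delta L e) = (e \<otimes> \<one> I) \<cdot> (\<one> (A \<odot> A) \<otimes> (l \<cdot> mu \<cdot> tau)) \<cdot> (\<one> A \<otimes> Dl \<otimes> S) \<cdot> (\<one> A \<otimes> symm C A I)"
    unfolding Fm_def a using te by (simp add: chain[OF b])
  also have "\<dots> = (e \<otimes> \<one> I) \<cdot> (\<one> A \<otimes> ((\<one> A \<otimes> (l \<cdot> mu \<cdot> tau)) \<cdot> (Dl \<otimes> S) \<cdot> symm C A I))"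
    using te by (simp add: W3)
  also have "\<dots> = (e \<otimes> \<one> I) \<cdot> (\<one> A \<otimes> Rg)" by (simp only: Zp)
  finally show ?thesis .
qed

lemma cancel: assumes e: "e \<in> hom C (A \<odot> A) I"
  shows "((e \<otimes> \<one> I) \<cdot> (\<one> A \<otimes> Rg)) \<cdot> (\<one> A \<otimes> Rh) = e \<otimes> \<one> I"
proof -
  have te: "Ar e" "Sr e = A \<odot> A" "Tg e = I" using e by (auto simp: hom_iff)
  have "(\<one> A \<otimes> Rg) \<cdot> (\<one> A \<otimes> Rh) = \<one> A \<otimes> (Rg \<cdot> Rh)" by (simp add: W3)
  thus ?thesis using te by (simp add: RgRh)
qed

lemma inv_cancel: assumes e: "e \<in> hom C X I" and e': "e' \<in> hom C X I"
  and eq: "e \<otimes> \<one> I = e' \<otimes> \<one> I" shows "e = e'"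
proof -
  obtain J f g where f: "f \<in> hom C (I \<odot> J) U" and g: "g \<in> hom C U (I \<odot> J)"
    and fg: "f \<cdot> g = \<one> U"
    using Inv unfolding invertible_obj_def by blast
  have tf: "Ar f" "Sr f = I \<odot> J" "Tg f = U" using f by (auto simp: hom_iff)
  have tg: "Ar g" "Sr g = U" "Tg g = I \<odot> J" using g by (auto simp: hom_iff)
  have key: "(\<one> I \<otimes> f) \<cdot> ((h \<otimes> \<one> I) \<otimes> \<one> J) \<cdot> (\<one> X \<otimes> g) = h" if h: "h \<in> hom C X I" for h
  proof -
    have th: "Ar h" "Sr h = X" "Tg h = I" using h by (auto simp: hom_iff)
    have f1: "(h \<otimes> \<one> I) \<otimes> \<one> J = h \<otimes> \<one> (I \<odot> J)" using th by simp
    have f2: "(h \<otimes> \<one> (I \<odot> J)) \<cdot> (\<one> X \<otimes> g) = h \<otimes> g"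
      using xch[of "\<one> X" h g "\<one> (I \<odot> J)"] th tg by simp
    have f3: "(\<one> I \<otimes> f) \<cdot> (h \<otimes> g) = h \<otimes> (f \<cdot> g)"
      using xch[of h "\<one> I" g f] th tg tf by simp
    have f4: "h \<otimes> \<one> U = h" using th by simp
    show ?thesis unfolding f1 f2 f3 fg f4 ..
  qed
  show ?thesis using key[OF e] key[OF e'] eq by metis
qed

lemma inj: "inj_on (Psi C A delta L) (hom C (A \<odot> A) I)"
proof (rule inj_onI)
  fix e e' assume e: "e \<in> hom C (A \<odot> A) I" and e': "e' \<in> hom C (A \<odot> A) I"
    and eq: "Psi C A delta L e = Psi C A delta L e'"
  have "(e \<otimes> \<one> I) \<cdot> (\<one> A \<otimes> Rg) = (e' \<otimes> \<one> I) \<cdot> (\<one> A \<otimes> Rg)"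
    using FPsi[OF e] FPsi[OF e'] eq by simp
  hence "((e \<otimes> \<one> I) \<cdot> (\<one> A \<otimes> Rg)) \<cdot> (\<one> A \<otimes> Rh) = ((e' \<otimes> \<one> I) \<cdot> (\<one> A \<otimes> Rg)) \<cdot> (\<one> A \<otimes> Rh)"
    by (rule arg_cong)
  hence "e \<otimes> \<one> I = e' \<otimes> \<one> I" by (simp only: cancel[OF e] cancel[OF e'])
  thus "e = e'" using inv_cancel[OF e e'] by simp
qed



end

theorem mainTheorem6:
  fixes C :: "('o, 'm) smc"
    and A I :: 'o
    and mu eta delta eps S L l :: 'm
  assumes "ssmc C"
    and "involutory_hopf C A mu eta delta eps S"
    and "invertible_obj C I"
    and "universal_left_integral C A mu eps I L"
    and "universal_right_cointegral C A delta eta I l"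
    and "cmp C l L = ident C I"
  shows "inj_on (Psi C A delta L) (hom C (otensor C A A) I)"
proof -
  interpret hopf C A I mu eta delta eps S L l
    using assms by (simp add: hopf_def hopf_axioms_def)
  show ?thesis by (rule inj)
qed

end
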